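(* Let $S$ be a Hausdorff topological semigroup containing the bicyclic semigroup $\mathcal C(p,q)$ as a dense subsemigroup. Then: (1) $S\setminus\mathcal C(p,q)$ is a two-sided ideal of $S$; (2) for every $c\in\mathcal C(p,q)$ the set $D_c=\{(x,y):x,y\in\mathcal C(p,q),\ xy=c\}$ is an open-and-closed discrete subspace of $S\times S$; (3) $S\times S$ is not pseudocompact; (4) if $S$ is Tychonoff, then its Stone–Čech compactification $\beta S$ is not openly factorizable; (5) the almost periodic compactification $\mathrm{AP}(S)$ of $S$ is a compact abelian topological group, and hence the canonical homomorphism $\eta:S\to\mathrm{AP}(S)$ is not injective.
   Context: The bicyclic semigroup $\mathcal C(p,q)$ is the semigroup with identity $1$ generated by $p,q$ subject to the single relation $qp=1$; every element is uniquely $p^nq^m$ ($n,m\in\omega$). A space is pseudocompact if every locally finite open cover is finite. A space $X$ is openly factorizable if every continuous map $f:X\to Y$ to a separable metrizable $Y$ factors as $f=g\circ p$ with $p:X\to K$ an open continuous surjection onto a separable metrizable $K$ and $g:K\to Y$ continuous. The almost periodic compactification of a semitopological semigroup $S$ is a pair $(\mathrm{AP}(S),\eta)$ where $\mathrm{AP}(S)$ is a compact Hausdorff topological semigroup and $\eta:S\to\mathrm{AP}(S)$ is a continuous homomorphism such that every continuous homomorphism $h:S\to K$ into a compact Hausdorff topological semigroup $K$ factors uniquely as $h=\bar h\circ\eta$ with $\bar h:\mathrm{AP}(S)\to K$ a continuous homomorphism. *)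

theory Defs
  imports "HOL-Analysis.Analysis"
begin

text \<open>The bicyclic semigroup C(p,q): the pair (n,m) stands for p^n q^m; qp = 1.\<close>
definition bicyclic_mult :: "nat \<times> nat \<Rightarrow> nat \<times> nat \<Rightarrow> nat \<times> nat" where
  "bicyclic_mult x y =
     (case x of (n, m) \<Rightarrow> case y of (k, l) \<Rightarrow>
        if m \<le> k then (n + k - m, l) else (n, m - k + l))"

definition pseudocompact_space :: "'a topology \<Rightarrow> bool" where
  "pseudocompact_space X \<longleftrightarrow>
     (\<forall>\<U>. (\<forall>U\<in>\<U>. openin X U) \<and> \<Union>\<U> = topspace X \<and> locally_finite_in X \<U>
           \<longrightarrow> finite \<U>)"

text \<open>Separable metrizable spaces Y and K are taken to be
  topologies on subsets of the type real; every separable metrizable space has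
  cardinality at most continuum, hence is homeomorphic to such a space.\<close>
definition openly_factorizable :: "'b topology \<Rightarrow> bool" where
  "openly_factorizable X \<longleftrightarrow>
     (\<forall>(Y::real topology) f.
        separable_space Y \<and> metrizable_space Y \<and> continuous_map X Y f \<longrightarrow>
        (\<exists>(K::real topology) p g.
           separable_space K \<and> metrizable_space K \<and>
           continuous_map X K p \<and> open_map X K p \<and> p ` topspace X = topspace K \<and>
           continuous_map K Y g \<and> (\<forall>x\<in>topspace X. f x = g (p x))))"

definition stone_cech_compactification ::
    "'a topology \<Rightarrow> 'b topology \<Rightarrow> ('a \<Rightarrow> 'b) \<Rightarrow> bool" where
  "stone_cech_compactification X K j \<longleftrightarrow>
     compact_space K \<and> Hausdorff_space K \<and> embedding_map X K j \<and>
     K closure_of (j ` topspace X) = topspace K \<and>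
     (\<forall>f. continuous_map X (top_of_set {0..1::real}) f \<longrightarrow>
        (\<exists>g. continuous_map K (top_of_set {0..1::real}) g \<and>
             (\<forall>x\<in>topspace X. g (j x) = f x)))"

definition topological_semigroup_on :: "'c topology \<Rightarrow> ('c \<Rightarrow> 'c \<Rightarrow> 'c) \<Rightarrow> bool" where
  "topological_semigroup_on K m \<longleftrightarrow>
     (\<forall>x\<in>topspace K. \<forall>y\<in>topspace K. m x y \<in> topspace K) \<and>
     (\<forall>x\<in>topspace K. \<forall>y\<in>topspace K. \<forall>z\<in>topspace K. m (m x y) z = m x (m y z)) \<and>
     continuous_map (prod_topology K K) K (\<lambda>z. m (fst z) (snd z))"

definition compact_hausdorff_topsemigroup :: "'c topology \<Rightarrow> ('c \<Rightarrow> 'c \<Rightarrow> 'c) \<Rightarrow> bool" where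
  "compact_hausdorff_topsemigroup K m \<longleftrightarrow>
     compact_space K \<and> Hausdorff_space K \<and> topological_semigroup_on K m"

definition cont_hom_into :: "'c topology \<Rightarrow> ('c \<Rightarrow> 'c \<Rightarrow> 'c) \<Rightarrow> ('a::{times,topological_space} \<Rightarrow> 'c) \<Rightarrow> bool" where
  "cont_hom_into K m h \<longleftrightarrow>
     continuous_map euclidean K h \<and> (\<forall>x y. h (x * y) = m (h x) (h y))"

text \<open>(A, mA, eta) is the almost periodic compactification of 'a: universal among
  continuous homomorphisms into compact Hausdorff topological semigroups
  (targets ranging over topologies on the same type as A).\<close>
definition almost_periodic_compactification ::
    "'c topology \<Rightarrow> ('c \<Rightarrow> 'c \<Rightarrow> 'c) \<Rightarrow> ('a::{times,topological_space} \<Rightarrow> 'c) \<Rightarrow> bool" where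
  "almost_periodic_compactification A mA eta \<longleftrightarrow>
     compact_hausdorff_topsemigroup A mA \<and> cont_hom_into A mA eta \<and>
     (\<forall>(K::'c topology) mK h.
        compact_hausdorff_topsemigroup K mK \<and> cont_hom_into K mK h \<longrightarrow>
        (\<exists>hb. continuous_map A K hb \<and>
              (\<forall>x\<in>topspace A. \<forall>y\<in>topspace A. hb (mA x y) = mK (hb x) (hb y)) \<and>
              (\<forall>s. h s = hb (eta s)) \<and>
              (\<forall>hb'. continuous_map A K hb' \<and>
                  (\<forall>x\<in>topspace A. \<forall>y\<in>topspace A. hb' (mA x y) = mK (hb' x) (hb' y)) \<and>
                  (\<forall>s. h s = hb' (eta s)) \<longrightarrow> (\<forall>z\<in>topspace A. hb' z = hb z))))"

definition compact_abelian_topological_group :: "'c topology \<Rightarrow> ('c \<Rightarrow> 'c \<Rightarrow> 'c) \<Rightarrow> bool" where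
  "compact_abelian_topological_group A m \<longleftrightarrow>
     compact_space A \<and> Hausdorff_space A \<and> topological_semigroup_on A m \<and>
     (\<forall>x\<in>topspace A. \<forall>y\<in>topspace A. m x y = m y x) \<and>
     (\<exists>e\<in>topspace A. \<exists>inv.
        (\<forall>x\<in>topspace A. m e x = x \<and> m x e = x) \<and>
        continuous_map A A inv \<and>
        (\<forall>x\<in>topspace A. m x (inv x) = e \<and> m (inv x) x = e))"

end

theory Submission
  imports Defs
begin


lemma bm: "bicyclic_mult (n,m) (k,l) = (if m \<le> k then (n+k-m,l) else (n, m-k+l))"
  by (simp add: bicyclic_mult_def)

locale bic =
  fixes e :: "nat \<times> nat \<Rightarrow> 'a::{t2_space, semigroup_mult}"
  assumes topsg: "continuous_on UNIV (\<lambda>z::'a \<times> 'a. fst z * snd z)"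
    and inj: "inj e"
    and hom: "\<And>x y. e (bicyclic_mult x y) = e x * e y"
    and dense: "closure (range e) = UNIV"
begin

lemma cont_lmult: "continuous_on UNIV (\<lambda>x. (a::'a) * x)"
proof -
  have "continuous_on UNIV (\<lambda>x. (a,x))" by (intro continuous_intros)
  moreover have "continuous_on (range (\<lambda>x. (a,x))) (\<lambda>z::'a \<times> 'a. fst z * snd z)"
    using continuous_on_subset[OF topsg] by blast
  ultimately have "continuous_on UNIV ((\<lambda>z. fst z * snd z) \<circ> (\<lambda>x. (a,x)))" by (rule continuous_on_compose)

  then show ?thesis by (simp add: o_def)
qed

lemma cont_rmult: "continuous_on UNIV (\<lambda>x. x * (a::'a))"
proof -
  have "continuous_on UNIV (\<lambda>x. (x,a))" by (intro continuous_intros)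
  moreover have "continuous_on (range (\<lambda>x. (x,a))) (\<lambda>z::'a \<times> 'a. fst z * snd z)"
    using continuous_on_subset[OF topsg] by blast
  ultimately have "continuous_on UNIV ((\<lambda>z. fst z * snd z) \<circ> (\<lambda>x. (x,a)))" by (rule continuous_on_compose)

  then show ?thesis by (simp add: o_def)
qed

lemma e_eq: "e x = e y \<longleftrightarrow> x = y"
  using inj by (auto dest: injD)

lemma open_one: "\<exists>U. open U \<and> U \<inter> range e = {e (0,0)}"
proof -
  let ?Z1 = "{x. e (1,1) * x = x}" and ?Z2 = "{x. x * e(1,1) = x}"
  have c1: "closed ?Z1" by (rule closed_Collect_eq) (auto intro: cont_lmult continuous_intros)
  have c2: "closed ?Z2" by (rule closed_Collect_eq) (auto intro: cont_rmult continuous_intros)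
  have "(- (?Z1 \<union> ?Z2)) \<inter> range e = {e (0,0)}"
  proof (intro equalityI subsetI)
    fix z assume z: "z \<in> (- (?Z1 \<union> ?Z2)) \<inter> range e"
    then obtain n m where zd: "z = e (n,m)" by auto
    have "n = 0"
    proof (rule ccontr)
      assume "n \<noteq> 0"
      then have "e (1,1) * z = z" unfolding zd hom[symmetric] by (simp add: bm)
      with z show False by auto
    qed
    moreover have "m = 0"
    proof (rule ccontr)
      assume "m \<noteq> 0"
      then have "z * e (1,1) = z" unfolding zd hom[symmetric] by (cases "m = 1") (auto simp add: bm)
      with z show False by auto
    qed
    ultimately show "z \<in> {e (0,0)}" using zd by simp
  next
    fix z assume "z \<in> {e (0,0)}"
    then show "z \<in> (- (?Z1 \<union> ?Z2)) \<inter> range e"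
      by (auto simp: hom[symmetric] bm e_eq)
  qed
  moreover have "open (- (?Z1 \<union> ?Z2))" using c1 c2 by auto
  ultimately show ?thesis by blast
qed

lemma fin_aux: "finite {d. bicyclic_mult (bicyclic_mult (0,n) d) (m,0) = (0,0)}"
proof (rule finite_subset)
  show "{d. bicyclic_mult (bicyclic_mult (0,n) d) (m,0) = (0,0)} \<subseteq> {..n} \<times> {..m}"
  proof
    fix d assume "d \<in> {d. bicyclic_mult (bicyclic_mult (0,n) d) (m,0) = (0,0)}"
    moreover obtain a b where "d = (a,b)" by fastforce
    ultimately show "d \<in> {..n} \<times> {..m}"
      by (auto simp: bm split: if_splits)
  qed
qed auto

lemma open_pt: "open {e c}"
proof -
  obtain n m where c: "c = (n,m)" by fastforce
  obtain U where U: "open U" "U \<inter> range e = {e (0,0)}" using open_one by blast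
  define \<psi> where "\<psi> x = (e (0,n) * x) * e (m,0)" for x
  have cpsi: "continuous_on UNIV \<psi>"
  proof -
    have "continuous_on UNIV ((\<lambda>x. x * e(m,0)) \<circ> (\<lambda>x. e (0,n) * x))"
      by (rule continuous_on_compose) (auto intro: cont_lmult continuous_on_subset[OF cont_rmult])
    then show ?thesis by (simp add: \<psi>_def o_def)
  qed
  define F where "F = {d. bicyclic_mult (bicyclic_mult (0,n) d) (m,0) = (0,0)}"
  have fF: "finite F" unfolding F_def by (rule fin_aux)
  define W where "W = \<psi> -` U - e ` (F - {c})"
  have oO: "open W" unfolding W_def
    using cpsi U(1) fF by (intro open_Diff finite_imp_closed) (auto simp: open_vimage)
  have psie: "\<psi> (e d) = e (bicyclic_mult (bicyclic_mult (0,n) d) (m,0))" for d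
    by (simp add: \<psi>_def hom)
  have "bicyclic_mult (bicyclic_mult (0,n) c) (m,0) = (0,0)" by (simp add: c bm)
  then have cF: "c \<in> F" by (simp add: F_def)
  have O1: "W \<inter> range e = {e c}"
  proof (intro equalityI subsetI)
    fix z assume z: "z \<in> W \<inter> range e"
    then obtain d where zd: "z = e d" by auto
    have "\<psi> z \<in> U \<inter> range e" using z zd W_def psie by auto
    then have "d \<in> F" using U(2) zd psie by (auto simp: F_def e_eq)
    then have "d = c" using z zd W_def by (auto simp: e_eq)
    then show "z \<in> {e c}" using zd by simp
  next
    fix z assume "z \<in> {e c}"
    then show "z \<in> W \<inter> range e" using U(2) cF psie by (auto simp: W_def F_def e_eq)
  qed
  have "W \<subseteq> closure (W \<inter> range e)"
    using open_Int_closure_subset[OF oO, of "range e"] dense by simp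
  also have "\<dots> = {e c}" using O1 by simp
  finally have "W \<subseteq> {e c}" .
  moreover have "e c \<in> W" using O1 by auto
  ultimately have "W = {e c}" by auto
  with oO show ?thesis by simp
qed

lemma open_mult_vimage: "open B \<Longrightarrow> open ((\<lambda>z::'a\<times>'a. fst z * snd z) -` B)"
  by (rule continuous_imp_open_vimage[OF topsg]) auto

lemma closed_mult_vimage: "closed B \<Longrightarrow> closed ((\<lambda>z::'a\<times>'a. fst z * snd z) -` B)"
  using open_mult_vimage[of "- B"] by (simp add: closed_def vimage_Compl)

lemma fin_left: "finite {x. bicyclic_mult x y = c}"
proof -
  obtain k l where y: "y = (k,l)" by fastforce
  obtain a b where c: "c = (a,b)" by fastforce
  show ?thesis
  proof (rule finite_subset)
    show "{x. bicyclic_mult x y = c} \<subseteq> {..a} \<times> {..b+k}"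
    proof
      fix x assume "x \<in> {x. bicyclic_mult x y = c}"
      moreover obtain n m where "x = (n,m)" by fastforce
      ultimately show "x \<in> {..a} \<times> {..b+k}" using y c by (auto simp: bm split: if_splits)
    qed
  qed auto
qed

lemma fin_right: "finite {x. bicyclic_mult y x = c}"
proof -
  obtain n m where y: "y = (n,m)" by fastforce
  obtain a b where c: "c = (a,b)" by fastforce
  show ?thesis
  proof (rule finite_subset)
    show "{x. bicyclic_mult y x = c} \<subseteq> {..a+m} \<times> {..b}"
    proof
      fix x assume "x \<in> {x. bicyclic_mult y x = c}"
      moreover obtain k l where "x = (k,l)" by fastforce
      ultimately show "x \<in> {..a+m} \<times> {..b}" using y c by (auto simp: bm split: if_splits)
    qed
  qed auto
qed

lemma infinite_nbhd:
  assumes "s \<notin> range e" "open U" "s \<in> U"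
  shows "infinite (U \<inter> range e)"
proof
  assume fin: "finite (U \<inter> range e)"
  have "s \<in> closure (range e)" using dense by simp
  then have "s islimpt range e" using assms(1) by (simp add: closure_def)
  moreover have "s \<in> U - (U \<inter> range e)" using assms by auto
  moreover have "open (U - (U \<inter> range e))" using fin assms(2) by (intro open_Diff finite_imp_closed)
  ultimately obtain y where "y \<in> range e" "y \<in> U - (U \<inter> range e)" by (rule islimptE)
  then show False by simp
qed

lemma nonempty_nbhd:
  assumes "open V" "t \<in> V"
  shows "V \<inter> range e \<noteq> {}"
  using open_Int_closure_eq_empty[OF assms(1), of "range e"] dense assms(2) by auto

lemma ideal_aux:
  assumes s: "s \<notin> range e" and st: "s * t = e c \<or> t * s = e c"
  shows False
proof -
  let ?G = "(\<lambda>z::'a\<times>'a. fst z * snd z) -` {e c}"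
  have oG: "open ?G" by (rule open_mult_vimage[OF open_pt])
  show False
  proof (cases "s * t = e c")
    case True
    then have "(s,t) \<in> ?G" by simp
    from open_prod_elim[OF oG this] obtain U V where UV: "open U" "open V" "(s,t) \<in> U \<times> V" "U \<times> V \<subseteq> ?G" .
    have "t \<in> V" using UV(3) by simp
    then have "V \<inter> range e \<noteq> {}" by (rule nonempty_nbhd[OF UV(2)])
    then obtain y where y: "e y \<in> V" by auto
    have inf: "infinite (U \<inter> range e)" using infinite_nbhd[OF s UV(1)] UV(3) by auto
    have "U \<inter> range e \<subseteq> e ` {x. bicyclic_mult x y = c}"
    proof
      fix z assume "z \<in> U \<inter> range e"
      then obtain x where x: "z = e x" "e x \<in> U" by auto
      then have "(e x, e y) \<in> U \<times> V" using y by simp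
      then have "(e x, e y) \<in> ?G" using UV(4) by (rule subsetD[rotated])
      then have "e (bicyclic_mult x y) = e c" by (simp add: hom)
      then show "z \<in> e ` {x. bicyclic_mult x y = c}" using x by (auto simp: e_eq)
    qed
    moreover have "finite (e ` {x. bicyclic_mult x y = c})" using fin_left by simp
    ultimately show False using inf by (meson finite_subset)
  next
    case False
    then have "t * s = e c" using st by auto
    then have "(t,s) \<in> ?G" by simp
    from open_prod_elim[OF oG this] obtain V U where UV: "open V" "open U" "(t,s) \<in> V \<times> U" "V \<times> U \<subseteq> ?G" .
    have "t \<in> V" using UV(3) by simp
    then have "V \<inter> range e \<noteq> {}" by (rule nonempty_nbhd[OF UV(1)])
    then obtain y where y: "e y \<in> V" by auto
    have inf: "infinite (U \<inter> range e)" using infinite_nbhd[OF s UV(2)] UV(3) by auto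
    have "U \<inter> range e \<subseteq> e ` {x. bicyclic_mult y x = c}"
    proof
      fix z assume "z \<in> U \<inter> range e"
      then obtain x where x: "z = e x" "e x \<in> U" by auto
      then have "(e y, e x) \<in> V \<times> U" using y by simp
      then have "(e y, e x) \<in> ?G" using UV(4) by (rule subsetD[rotated])
      then have "e (bicyclic_mult y x) = e c" by (simp add: hom)
      then show "z \<in> e ` {x. bicyclic_mult y x = c}" using x by (auto simp: e_eq)
    qed
    moreover have "finite (e ` {x. bicyclic_mult y x = c})" using fin_right by simp
    ultimately show False using inf by (meson finite_subset)
  qed
qed

lemma part1: "s \<notin> range e \<Longrightarrow> s * t \<notin> range e \<and> t * s \<notin> range e"
  using ideal_aux by blast

lemma D_eq: "{(e x, e y) | x y. bicyclic_mult x y = c} = (\<lambda>z::'a\<times>'a. fst z * snd z) -` {e c}"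
proof (intro equalityI subsetI)
  fix z assume "z \<in> {(e x, e y) | x y. bicyclic_mult x y = c}"
  then show "z \<in> (\<lambda>z::'a\<times>'a. fst z * snd z) -` {e c}" by (auto simp: hom[symmetric])
next
  fix z assume z: "z \<in> (\<lambda>z::'a\<times>'a. fst z * snd z) -` {e c}"
  obtain s t where st: "z = (s,t)" by fastforce
  have "s \<in> range e" using part1[of s t] z st by auto
  moreover have "t \<in> range e" using part1[of t s] z st by auto
  ultimately obtain x y where xy: "s = e x" "t = e y" by auto
  then have "e (bicyclic_mult x y) = e c" using z st by (simp add: hom)
  then have "bicyclic_mult x y = c" by (simp add: e_eq)
  then show "z \<in> {(e x, e y) | x y. bicyclic_mult x y = c}" using xy st by blast
qed

lemma part2: "let D = {(e x, e y) | x y. bicyclic_mult x y = c} in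
            open D \<and> closed D \<and> subtopology euclidean D = discrete_topology D"
proof -
  define D where "D = {(e x, e y) | x y. bicyclic_mult x y = c}"
  have "open D" unfolding D_def D_eq by (rule open_mult_vimage[OF open_pt])
  moreover have "closed D" unfolding D_def D_eq by (rule closed_mult_vimage) simp
  moreover have "subtopology euclidean D = discrete_topology D"
  proof -
    have "openin (subtopology euclidean D) {z}" if "z \<in> D" for z
    proof -
      from that obtain x y where z: "z = (e x, e y)" unfolding D_def by auto
      have "open ({e x} \<times> {e y})" by (intro open_Times open_pt)
      then have "open {z}" using z by simp
      then show ?thesis unfolding openin_subtopology using that
        by (intro exI[of _ "{z}"]) auto
    qed
    then show ?thesis by (subst eq_commute) (simp add: discrete_topology_unique)
  qed
  ultimately show ?thesis by (simp add: D_def Let_def)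
qed

lemma part3: "\<not> pseudocompact_space (euclidean :: ('a \<times> 'a) topology)"
proof
  assume pc: "pseudocompact_space (euclidean :: ('a \<times> 'a) topology)"
  define D where "D = (\<lambda>z::'a\<times>'a. fst z * snd z) -` {e (0,0)}"
  have cD: "closed D" unfolding D_def by (rule closed_mult_vimage) simp
  have sD: "open {z}" if "z \<in> D" for z
  proof -
    have "z \<in> {(e x, e y) | x y. bicyclic_mult x y = (0,0)}" using that D_eq by (simp add: D_def)
    then obtain x y where z: "z = (e x, e y)" by blast
    have "open ({e x} \<times> {e y})" by (intro open_Times open_pt)
    then show "open {z}" using z by simp
  qed
  define \<U> where "\<U> = insert (- D) ((\<lambda>z. {z}) ` D)"
  have "finite \<U>"
    using pc unfolding pseudocompact_space_def
  proof (elim allE impE)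
    show "(\<forall>U\<in>\<U>. openin euclidean U) \<and> \<Union> \<U> = topspace euclidean \<and> locally_finite_in euclidean \<U>"
    proof (intro conjI)
      show "\<forall>U\<in>\<U>. openin euclidean U" using cD sD by (auto simp: \<U>_def)
      show "\<Union> \<U> = topspace euclidean" by (auto simp: \<U>_def)
      show "locally_finite_in euclidean \<U>"
        unfolding locally_finite_in_def
      proof (intro conjI ballI)
        show "\<Union> \<U> \<subseteq> topspace euclidean" by simp
        fix x :: "'a \<times> 'a"
        show "\<exists>V. openin euclidean V \<and> x \<in> V \<and> finite {U \<in> \<U>. U \<inter> V \<noteq> {}}"
        proof (cases "x \<in> D")
          case True
          have "{U \<in> \<U>. U \<inter> {x} \<noteq> {}} \<subseteq> {{x}}" using True by (auto simp: \<U>_def)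
          then have "finite {U \<in> \<U>. U \<inter> {x} \<noteq> {}}" by (rule finite_subset) simp
          then show ?thesis using sD[OF True] by (intro exI[of _ "{x}"]) auto
        next
          case False
          have "{U \<in> \<U>. U \<inter> (- D) \<noteq> {}} \<subseteq> {- D}" by (auto simp: \<U>_def)
          then have "finite {U \<in> \<U>. U \<inter> (- D) \<noteq> {}}" by (rule finite_subset) simp
          then show ?thesis using cD False by (intro exI[of _ "- D"]) auto
        qed
      qed
    qed
  qed
  moreover have "infinite \<U>"
  proof -
    have "range (\<lambda>n. {(e (0,n), e (n,0))}) \<subseteq> \<U>"
      by (auto simp: \<U>_def D_def hom[symmetric] bm)
    moreover have "inj (\<lambda>n. {(e (0,n), e (n,0))})"
      by (rule injI) (simp add: e_eq)
    then have "infinite (range (\<lambda>n. {(e (0,n), e (n,0))}))"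
      using range_inj_infinite by blast
    ultimately show ?thesis using infinite_super by blast
  qed
  ultimately show False by simp
qed

end


lemma nest_cluster:
  fixes \<sigma> :: "nat \<Rightarrow> 'x"
  assumes cpt: "compact_space X" and sig: "\<And>n. \<sigma> n \<in> topspace X"
  shows "\<exists>z\<in>topspace X. \<forall>N. z \<in> X closure_of (\<sigma> ` {N..})"
proof -
  have fip: "\<And>\<U>. (\<forall>C\<in>\<U>. closedin X C) \<Longrightarrow> (\<forall>\<F>. finite \<F> \<and> \<F> \<subseteq> \<U> \<longrightarrow> \<Inter>\<F> \<noteq> {}) \<Longrightarrow> \<Inter>\<U> \<noteq> {}"
    using cpt unfolding compact_space_fip by blast
  define U where "U = range (\<lambda>N. X closure_of (\<sigma> ` {N..}))"
  have "\<Inter>U \<noteq> {}"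
  proof (rule fip)
    show "\<forall>C\<in>U. closedin X C" by (auto simp: U_def)
    show "\<forall>\<F>. finite \<F> \<and> \<F> \<subseteq> U \<longrightarrow> \<Inter>\<F> \<noteq> {}"
    proof (intro allI impI)
      fix F assume F: "finite F \<and> F \<subseteq> U"
      then obtain I where I: "finite I" "F = (\<lambda>N. X closure_of (\<sigma> ` {N..})) ` I"
        unfolding U_def by (meson finite_subset_image)
      define M where "M = Max (insert 0 I)"
      have "\<sigma> M \<in> \<Inter>F"
      proof
        fix C assume "C \<in> F"
        then obtain N where N: "N \<in> I" "C = X closure_of (\<sigma> ` {N..})" using I by auto
        have "N \<le> M" using N I by (simp add: M_def)
        then have "\<sigma> M \<in> \<sigma> ` {N..}" by auto
        moreover have "\<sigma> ` {N..} \<subseteq> topspace X" using sig by auto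
        ultimately show "\<sigma> M \<in> C" using N closure_of_subset[of "\<sigma> ` {N..}" X] by auto
      qed
      then show "\<Inter>F \<noteq> {}" by auto
    qed
  qed
  then obtain z where z: "z \<in> \<Inter>U" by auto
  then have "z \<in> X closure_of (\<sigma> ` {0..})" unfolding U_def by blast
  then have "z \<in> topspace X" using closure_of_subset_topspace[of X "\<sigma> ` {0..}"] by blast
  with z show ?thesis by (auto simp: U_def)
qed

locale apc = bic e for e :: "nat \<times> nat \<Rightarrow> 'a::{t2_space, semigroup_mult}" +
  fixes A :: "'c topology" and mA :: "'c \<Rightarrow> 'c \<Rightarrow> 'c" and eta :: "'a \<Rightarrow> 'c"
  assumes ap: "almost_periodic_compactification A mA eta"
begin

lemma ap1: "compact_hausdorff_topsemigroup A mA" and ap2: "cont_hom_into A mA eta"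
  using ap unfolding almost_periodic_compactification_def by simp_all

lemma cpt: "compact_space A" and haus: "Hausdorff_space A"
  and mclo: "\<And>x y. x \<in> topspace A \<Longrightarrow> y \<in> topspace A \<Longrightarrow> mA x y \<in> topspace A"
  and assoc: "\<And>x y z. x \<in> topspace A \<Longrightarrow> y \<in> topspace A \<Longrightarrow> z \<in> topspace A \<Longrightarrow> mA (mA x y) z = mA x (mA y z)"
  and cmul: "continuous_map (prod_topology A A) A (\<lambda>z. mA (fst z) (snd z))"
  and ceta: "continuous_map euclidean A eta"
  and heta: "\<And>x y. eta (x * y) = mA (eta x) (eta y)"
  using ap1 ap2 unfolding compact_hausdorff_topsemigroup_def
    topological_semigroup_on_def cont_hom_into_def by simp_all

definition "\<phi> x = eta (e x)"

lemma phi_mult: "\<phi> (bicyclic_mult x y) = mA (\<phi> x) (\<phi> y)"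
  by (simp add: \<phi>_def hom heta)

lemma phi_in: "\<phi> x \<in> topspace A"
  using ceta unfolding \<phi>_def continuous_map_def by auto

lemma lmul: "c \<in> topspace A \<Longrightarrow> continuous_map A A (\<lambda>x. mA c x)"
proof -
  assume c: "c \<in> topspace A"
  have "continuous_map A (prod_topology A A) (\<lambda>x. (c, x))"
    using c by (intro continuous_map_pairedI) auto
  from continuous_map_compose[OF this cmul] show ?thesis by (simp add: o_def)
qed

lemma rmul: "c \<in> topspace A \<Longrightarrow> continuous_map A A (\<lambda>x. mA x c)"
proof -
  assume c: "c \<in> topspace A"
  have "continuous_map A (prod_topology A A) (\<lambda>x. (x, c))"
    using c by (intro continuous_map_pairedI) auto
  from continuous_map_compose[OF this cmul] show ?thesis by (simp add: o_def)
qed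

lemma ab_eq: "\<phi> (1,1) = \<phi> (0,0)"
proof -
  define \<sigma> where "\<sigma> n = (\<phi> (0,n), \<phi> (n,0))" for n
  have "\<exists>z\<in>topspace (prod_topology A A). \<forall>N. z \<in> (prod_topology A A) closure_of (\<sigma> ` {N..})"
    by (rule nest_cluster) (auto simp: \<sigma>_def phi_in cpt compact_space_prod_topology)
  then obtain h f where hf: "h \<in> topspace A" "f \<in> topspace A"
    and clu: "\<And>N. (h,f) \<in> (prod_topology A A) closure_of (\<sigma> ` {N..})" by auto
  let ?\<mu> = "\<lambda>z. mA (fst z) (snd z)"
  have u_eq: "mA h f = \<phi> (0,0)"
  proof -
    have "?\<mu> ` ((prod_topology A A) closure_of (\<sigma> ` {0..})) \<subseteq> A closure_of (?\<mu> ` \<sigma> ` {0..})"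
      by (rule continuous_map_image_closure_subset[OF cmul])
    moreover have "?\<mu> (\<sigma> n) = \<phi> (0,0)" for n by (simp add: \<sigma>_def phi_mult[symmetric] bm)
    then have "?\<mu> ` \<sigma> ` {0..} = {\<phi> (0,0)}" by (auto simp: image_image)
    moreover have "A closure_of {\<phi> (0,0)} = {\<phi> (0,0)}"
      by (rule closure_of_closedin[OF closedin_Hausdorff_singleton[OF haus phi_in]])
    ultimately show ?thesis using clu[of 0] by auto
  qed
  have fclu: "f \<in> A closure_of ((\<lambda>n. \<phi> (n,0)) ` {N..})" for N
  proof -
    have "snd ` ((prod_topology A A) closure_of (\<sigma> ` {N..})) \<subseteq> A closure_of (snd ` \<sigma> ` {N..})"
      by (rule continuous_map_image_closure_subset[OF continuous_map_snd])
    moreover have "snd ` \<sigma> ` {N..} = (\<lambda>n. \<phi> (n,0)) ` {N..}" by (auto simp: \<sigma>_def image_image)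
    ultimately show ?thesis using clu[of N] by force
  qed
  have hclu: "h \<in> A closure_of ((\<lambda>n. \<phi> (0,n)) ` {0..})"
  proof -
    have "fst ` ((prod_topology A A) closure_of (\<sigma> ` {0..})) \<subseteq> A closure_of (fst ` \<sigma> ` {0..})"
      by (rule continuous_map_image_closure_subset[OF continuous_map_fst])
    moreover have "fst ` \<sigma> ` {0..} = (\<lambda>n. \<phi> (0,n)) ` {0..}" by (auto simp: \<sigma>_def image_image)
    ultimately show ?thesis using clu[of 0] by force
  qed
  define P where "P = range (\<lambda>n. \<phi> (Suc n, 0))"
  define Q where "Q = {x \<in> topspace A. mA x f \<in> A closure_of P}"
  have cQ: "closedin A Q" unfolding Q_def
    by (rule closedin_continuous_map_preimage[OF rmul[OF hf(2)]]) simp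
  have "\<phi> (0,k) \<in> Q" for k
  proof -
    have "(\<lambda>x. mA (\<phi> (0,k)) x) ` (A closure_of ((\<lambda>n. \<phi> (n,0)) ` {Suc k..}))
          \<subseteq> A closure_of ((\<lambda>x. mA (\<phi> (0,k)) x) ` (\<lambda>n. \<phi> (n,0)) ` {Suc k..})"
      by (rule continuous_map_image_closure_subset[OF lmul[OF phi_in]])
    moreover have "(\<lambda>x. mA (\<phi> (0,k)) x) ` (\<lambda>n. \<phi> (n,0)) ` {Suc k..} \<subseteq> P"
    proof
      fix y assume "y \<in> (\<lambda>x. mA (\<phi> (0,k)) x) ` (\<lambda>n. \<phi> (n,0)) ` {Suc k..}"
      then obtain n where n: "n \<ge> Suc k" "y = mA (\<phi> (0,k)) (\<phi> (n,0))" by auto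
      then have "y = \<phi> (n - k, 0)" by (simp add: phi_mult[symmetric] bm)
      moreover have "n - k = Suc (n - Suc k)" using n(1) by simp
      ultimately have "y = \<phi> (Suc (n - Suc k), 0)" by simp
      then show "y \<in> P" by (simp add: P_def)
    qed
    ultimately have "mA (\<phi> (0,k)) f \<in> A closure_of P"
      using fclu[of "Suc k"] closure_of_mono by blast
    then show ?thesis by (simp add: Q_def phi_in)
  qed
  then have "(\<lambda>n. \<phi> (0,n)) ` {0..} \<subseteq> Q" by auto
  then have "A closure_of ((\<lambda>n. \<phi> (0,n)) ` {0..}) \<subseteq> Q" using cQ by (rule closure_of_minimal)
  then have "h \<in> Q" using hclu by auto
  then have uP: "\<phi> (0,0) \<in> A closure_of P" using u_eq by (simp add: Q_def)
  define Ca where "Ca = {x \<in> topspace A. mA x (\<phi> (1,0)) = mA (\<phi> (1,0)) x}"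
  have cCa: "closedin A Ca" unfolding Ca_def
    by (rule closedin_continuous_maps_eq[OF haus rmul[OF phi_in] lmul[OF phi_in]])
  have "(\<lambda>x. mA (\<phi> (0,1)) x) ` (A closure_of P) \<subseteq> A closure_of ((\<lambda>x. mA (\<phi> (0,1)) x) ` P)"
    by (rule continuous_map_image_closure_subset[OF lmul[OF phi_in]])
  moreover have "(\<lambda>x. mA (\<phi> (0,1)) x) ` P \<subseteq> Ca"
  proof
    fix y assume "y \<in> (\<lambda>x. mA (\<phi> (0,1)) x) ` P"
    then obtain n where "y = mA (\<phi> (0,1)) (\<phi> (Suc n,0))" by (auto simp: P_def)
    then have y: "y = \<phi> (n,0)" by (simp add: phi_mult[symmetric] bm)
    have "mA y (\<phi> (1,0)) = \<phi> (Suc n, 0)" by (simp add: y phi_mult[symmetric] bm)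
    moreover have "mA (\<phi> (1,0)) y = \<phi> (Suc n, 0)" by (simp add: y phi_mult[symmetric] bm)
    ultimately show "y \<in> Ca" by (simp add: Ca_def y phi_in)
  qed
  then have "A closure_of ((\<lambda>x. mA (\<phi> (0,1)) x) ` P) \<subseteq> Ca" using cCa by (rule closure_of_minimal)
  moreover have "mA (\<phi> (0,1)) (\<phi> (0,0)) = \<phi> (0,1)" by (simp add: phi_mult[symmetric] bm)
  ultimately have "\<phi> (0,1) \<in> Ca" using uP by force
  then have "mA (\<phi> (0,1)) (\<phi> (1,0)) = mA (\<phi> (1,0)) (\<phi> (0,1))" by (simp add: Ca_def)
  then show ?thesis by (simp add: phi_mult[symmetric] bm)
qed

lemma phi_suc: "\<phi> (Suc a, Suc b) = \<phi> (a, b)"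
proof -
  have "\<phi> (Suc a, Suc b) = \<phi> (bicyclic_mult (bicyclic_mult (a,0) (1,1)) (0,b))" by (simp add: bm)
  also have "\<dots> = mA (mA (\<phi> (a,0)) (\<phi> (1,1))) (\<phi> (0,b))" by (simp add: phi_mult)
  also have "\<dots> = mA (mA (\<phi> (a,0)) (\<phi> (0,0))) (\<phi> (0,b))" unfolding ab_eq ..
  also have "\<dots> = \<phi> (bicyclic_mult (bicyclic_mult (a,0) (0,0)) (0,b))" by (simp add: phi_mult)
  also have "\<dots> = \<phi> (a,b)" by (simp add: bm)
  finally show ?thesis .
qed

lemma phi_shift: "\<phi> (n + k, m + k) = \<phi> (n, m)"
  by (induction k) (simp_all add: phi_suc)

lemma phi_canon: "\<phi> (n, m) = \<phi> (n - m, m - n)"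
proof -
  have "\<phi> (n - m, m - n) = \<phi> ((n - m) + min n m, (m - n) + min n m)" by (simp add: phi_shift)
  also have "(n - m) + min n m = n" by simp
  also have "(m - n) + min n m = m" by simp
  finally show ?thesis by simp
qed

lemma phi_diff: "int n - int m = int n' - int m' \<Longrightarrow> \<phi> (n, m) = \<phi> (n', m')"
proof -
  assume h: "int n - int m = int n' - int m'"
  then have "n - m = n' - m'" "m - n = m' - n'" by linarith+
  then show ?thesis by (metis phi_canon)
qed

lemma phi_comm: "mA (\<phi> x) (\<phi> y) = mA (\<phi> y) (\<phi> x)"
proof -
  obtain n m where x: "x = (n,m)" by fastforce
  obtain k l where y: "y = (k,l)" by fastforce
  obtain a b where ab: "bicyclic_mult x y = (a,b)" by fastforce
  obtain c d where cd: "bicyclic_mult y x = (c,d)" by fastforce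
  have "int a - int b = int c - int d" using ab cd x y by (auto simp: bm split: if_splits)
  then have "\<phi> (a,b) = \<phi> (c,d)" by (rule phi_diff)
  then show ?thesis using ab cd by (simp add: phi_mult[symmetric])
qed

lemma phi_unit: "mA (\<phi> (0,0)) (\<phi> x) = \<phi> x" "mA (\<phi> x) (\<phi> (0,0)) = \<phi> x"
proof -
  obtain n m where x: "x = (n,m)" by fastforce
  show "mA (\<phi> (0,0)) (\<phi> x) = \<phi> x" "mA (\<phi> x) (\<phi> (0,0)) = \<phi> x"
    by (simp_all add: x phi_mult[symmetric] bm)
qed

lemma phi_inv: "mA (\<phi> (n,m)) (\<phi> (m,n)) = \<phi> (0,0)"
  by (simp add: phi_mult[symmetric] bm phi_shift[of 0 n 0, simplified])

lemma univ: "\<And>(K::'c topology) mK h. compact_hausdorff_topsemigroup K mK \<Longrightarrow> cont_hom_into K mK h \<Longrightarrow>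
        (\<exists>hb. continuous_map A K hb \<and>
              (\<forall>x\<in>topspace A. \<forall>y\<in>topspace A. hb (mA x y) = mK (hb x) (hb y)) \<and>
              (\<forall>s. h s = hb (eta s)) \<and>
              (\<forall>hb'. continuous_map A K hb' \<and>
                  (\<forall>x\<in>topspace A. \<forall>y\<in>topspace A. hb' (mA x y) = mK (hb' x) (hb' y)) \<and>
                  (\<forall>s. h s = hb' (eta s)) \<longrightarrow> (\<forall>z\<in>topspace A. hb' z = hb z)))"
  using ap unfolding almost_periodic_compactification_def by blast

lemma top_eq: "topspace A = A closure_of (range \<phi>)"
proof -
  define Cl where "Cl = A closure_of (range \<phi>)"
  let ?\<mu> = "\<lambda>z. mA (fst z) (snd z)"
  have Cl_sub: "Cl \<subseteq> topspace A" unfolding Cl_def by (rule closure_of_subset_topspace)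
  have cCl: "closedin A Cl" unfolding Cl_def by simp
  have mclo_Cl: "mA x y \<in> Cl" if "x \<in> Cl" "y \<in> Cl" for x y
  proof -
    have "?\<mu> ` ((prod_topology A A) closure_of (range \<phi> \<times> range \<phi>)) \<subseteq> A closure_of (?\<mu> ` (range \<phi> \<times> range \<phi>))"
      by (rule continuous_map_image_closure_subset[OF cmul])
    moreover have "?\<mu> ` (range \<phi> \<times> range \<phi>) \<subseteq> range \<phi>" by (auto simp: phi_mult[symmetric])
    ultimately have "?\<mu> ` (Cl \<times> Cl) \<subseteq> Cl"
      unfolding Cl_def closure_of_Times using closure_of_mono by blast
    moreover have "(x,y) \<in> Cl \<times> Cl" using that by simp
    ultimately have "?\<mu> (x,y) \<in> Cl" by blast
    then show ?thesis by simp
  qed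
  have range_eta: "range eta \<subseteq> Cl"
  proof -
    have "eta ` (euclidean closure_of (range e)) \<subseteq> A closure_of (eta ` range e)"
      by (rule continuous_map_image_closure_subset[OF ceta])
    moreover have "eta ` range e = range \<phi>" by (auto simp: \<phi>_def)
    ultimately show ?thesis using dense by (simp add: Cl_def)
  qed
  define K where "K = subtopology A Cl"
  have tK: "topspace K = Cl" unfolding K_def using Cl_sub by auto
  have chK: "compact_hausdorff_topsemigroup K mA"
    unfolding compact_hausdorff_topsemigroup_def topological_semigroup_on_def
  proof (intro conjI ballI)
    show "compact_space K" unfolding K_def
      by (rule compact_space_subtopology[OF closedin_compact_space[OF cpt cCl]])
    show "Hausdorff_space K" unfolding K_def by (rule Hausdorff_space_subtopology[OF haus])
    fix x y assume "x \<in> topspace K" "y \<in> topspace K"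
    then show "mA x y \<in> topspace K" using mclo_Cl tK by simp
  next
    fix x y z assume "x \<in> topspace K" "y \<in> topspace K" "z \<in> topspace K"
    then show "mA (mA x y) z = mA x (mA y z)" using tK Cl_sub by (intro assoc) auto
  next
    have "continuous_map (subtopology (prod_topology A A) (Cl \<times> Cl)) A ?\<mu>"
      by (rule continuous_map_from_subtopology[OF cmul])
    then have "continuous_map (prod_topology K K) A ?\<mu>" by (simp add: K_def subtopology_Times)
    moreover have "?\<mu> \<in> topspace (prod_topology K K) \<rightarrow> Cl" using mclo_Cl tK by auto
    ultimately show "continuous_map (prod_topology K K) K ?\<mu>"
      unfolding K_def by (simp add: continuous_map_in_subtopology)
  qed
  have hK: "cont_hom_into K mA eta"
    unfolding cont_hom_into_def
  proof (intro conjI allI)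
    show "continuous_map euclidean K eta"
      unfolding K_def using ceta range_eta by (auto simp: continuous_map_in_subtopology)
    fix x y show "eta (x * y) = mA (eta x) (eta y)" by (rule heta)
  qed
  obtain hb where hb: "continuous_map A K hb"
      "\<forall>x\<in>topspace A. \<forall>y\<in>topspace A. hb (mA x y) = mA (hb x) (hb y)"
      "\<forall>s. eta s = hb (eta s)"
    using univ[OF chK hK] by blast
  obtain hb0 where hb0: "\<forall>hb'. continuous_map A A hb' \<and>
                  (\<forall>x\<in>topspace A. \<forall>y\<in>topspace A. hb' (mA x y) = mA (hb' x) (hb' y)) \<and>
                  (\<forall>s. eta s = hb' (eta s)) \<longrightarrow> (\<forall>z\<in>topspace A. hb' z = hb0 z)"
    using univ[OF ap1 ap2] by blast
  have "\<forall>z\<in>topspace A. id z = hb0 z"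
    using hb0[rule_format, of id] by simp
  moreover have "continuous_map A A hb" using hb(1) unfolding K_def by (simp add: continuous_map_in_subtopology)
  then have "\<forall>z\<in>topspace A. hb z = hb0 z"
    using hb0[rule_format, of hb] hb(2,3) by blast
  ultimately have "\<forall>z\<in>topspace A. hb z = z" by simp
  moreover have "hb z \<in> Cl" if "z \<in> topspace A" for z
    using hb(1) that tK unfolding continuous_map_def by auto
  ultimately have "topspace A \<subseteq> Cl" by (intro subsetI) metis
  with Cl_sub show ?thesis by (simp add: Cl_def)
qed

lemma closure_prop:
  assumes "closedin (prod_topology A A) E" "range \<phi> \<times> range \<phi> \<subseteq> E"
    "x \<in> topspace A" "y \<in> topspace A"
  shows "(x,y) \<in> E"
proof -
  have "(prod_topology A A) closure_of (range \<phi> \<times> range \<phi>) \<subseteq> E"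
    using assms(2,1) by (rule closure_of_minimal)
  then show ?thesis using assms(3,4) top_eq by (auto simp: closure_of_Times)
qed

lemma closure_prop1:
  assumes "closedin A E" "range \<phi> \<subseteq> E" "x \<in> topspace A"
  shows "x \<in> E"
proof -
  have "A closure_of (range \<phi>) \<subseteq> E" using assms(2,1) by (rule closure_of_minimal)
  then show ?thesis using assms(3) top_eq by auto
qed

lemma comm_all: "x \<in> topspace A \<Longrightarrow> y \<in> topspace A \<Longrightarrow> mA x y = mA y x"
proof -
  assume xy: "x \<in> topspace A" "y \<in> topspace A"
  let ?E = "{z \<in> topspace (prod_topology A A). mA (fst z) (snd z) = mA (snd z) (fst z)}"
  have "continuous_map (prod_topology A A) (prod_topology A A) (\<lambda>z. (snd z, fst z))"
    by (intro continuous_map_pairedI continuous_map_fst continuous_map_snd)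
  from continuous_map_compose[OF this cmul]
  have "continuous_map (prod_topology A A) A (\<lambda>z. mA (snd z) (fst z))" by (simp add: o_def)
  then have "closedin (prod_topology A A) ?E"
    by (rule closedin_continuous_maps_eq[OF haus cmul])
  moreover have "range \<phi> \<times> range \<phi> \<subseteq> ?E" using phi_comm by (auto simp: phi_in)
  ultimately have "(x,y) \<in> ?E" using xy by (rule closure_prop)
  then show ?thesis by simp
qed

lemma unit_all: "x \<in> topspace A \<Longrightarrow> mA (\<phi> (0,0)) x = x \<and> mA x (\<phi> (0,0)) = x"
proof -
  assume x: "x \<in> topspace A"
  let ?E = "{x \<in> topspace A. mA (\<phi> (0,0)) x = id x}"
  have "closedin A ?E" by (rule closedin_continuous_maps_eq[OF haus lmul[OF phi_in] continuous_map_id])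
  moreover have "range \<phi> \<subseteq> ?E" using phi_unit by (auto simp: phi_in)
  ultimately have "x \<in> ?E" using x by (rule closure_prop1)
  then show ?thesis using comm_all[OF x phi_in] by simp
qed

lemma inv_ex: "x \<in> topspace A \<Longrightarrow> \<exists>y \<in> topspace A. mA x y = \<phi> (0,0)"
proof -
  assume x: "x \<in> topspace A"
  let ?\<mu> = "\<lambda>z. mA (fst z) (snd z)"
  let ?G = "{z \<in> topspace (prod_topology A A). ?\<mu> z \<in> {\<phi> (0,0)}}"
  have cG: "closedin (prod_topology A A) ?G"
    by (rule closedin_continuous_map_preimage[OF cmul closedin_Hausdorff_singleton[OF haus phi_in]])
  have cpA: "compact_space (prod_topology A A)" using cpt by (simp add: compact_space_prod_topology)
  have "compactin A (fst ` ?G)"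
    by (rule image_compactin[OF closedin_compact_space[OF cpA cG] continuous_map_fst])
  then have "closedin A (fst ` ?G)" by (rule compactin_imp_closedin[OF haus])
  moreover have "range \<phi> \<subseteq> fst ` ?G"
  proof
    fix z assume "z \<in> range \<phi>"
    then obtain n m where z: "z = \<phi> (n,m)" by (metis prod.collapse rangeE)
    have "(\<phi> (n,m), \<phi> (m,n)) \<in> ?G" using phi_inv by (simp add: phi_in)
    then show "z \<in> fst ` ?G" unfolding z by (rule image_eqI[rotated]) simp
  qed
  ultimately have "x \<in> fst ` ?G" using x by (rule closure_prop1)
  then show ?thesis by auto
qed

definition "ginv x = (SOME y. y \<in> topspace A \<and> mA x y = \<phi> (0,0))"

lemma inv_prop: "x \<in> topspace A \<Longrightarrow> ginv x \<in> topspace A \<and> mA x (ginv x) = \<phi> (0,0)"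
proof -
  assume x: "x \<in> topspace A"
  from inv_ex[OF x] have "\<exists>y. y \<in> topspace A \<and> mA x y = \<phi> (0,0)" by auto
  then show ?thesis unfolding ginv_def by (rule someI_ex)
qed

lemma inv_unique: "x \<in> topspace A \<Longrightarrow> y \<in> topspace A \<Longrightarrow> mA x y = \<phi> (0,0) \<Longrightarrow> y = ginv x"
proof -
  assume x: "x \<in> topspace A" and y: "y \<in> topspace A" and xy: "mA x y = \<phi> (0,0)"
  have i: "ginv x \<in> topspace A" "mA x (ginv x) = \<phi> (0,0)" using inv_prop[OF x] by auto
  have "y = mA y (\<phi> (0,0))" using unit_all[OF y] by simp
  also have "\<dots> = mA y (mA x (ginv x))" using i by simp
  also have "\<dots> = mA (mA y x) (ginv x)" using assoc[OF y x i(1)] by simp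
  also have "\<dots> = mA (mA x y) (ginv x)" using comm_all[OF x y] by simp
  also have "\<dots> = ginv x" using xy unit_all[OF i(1)] by simp
  finally show ?thesis .
qed

lemma inv_cont: "continuous_map A A ginv"
  unfolding continuous_map_closedin
proof (intro conjI allI impI)
  show "ginv \<in> topspace A \<rightarrow> topspace A" using inv_prop by auto
  fix C assume C: "closedin A C"
  let ?\<mu> = "\<lambda>z. mA (fst z) (snd z)"
  let ?G = "{z \<in> topspace (prod_topology A A). ?\<mu> z \<in> {\<phi> (0,0)}} \<inter> {z \<in> topspace (prod_topology A A). snd z \<in> C}"
  have cG: "closedin (prod_topology A A) ?G"
    by (intro closedin_Int closedin_continuous_map_preimage[OF cmul closedin_Hausdorff_singleton[OF haus phi_in]]
         closedin_continuous_map_preimage[OF continuous_map_snd C])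
  have cpA: "compact_space (prod_topology A A)" using cpt by (simp add: compact_space_prod_topology)
  have "compactin A (fst ` ?G)"
    by (rule image_compactin[OF closedin_compact_space[OF cpA cG] continuous_map_fst])
  then have cl: "closedin A (fst ` ?G)" by (rule compactin_imp_closedin[OF haus])
  have "{x \<in> topspace A. ginv x \<in> C} = fst ` ?G"
  proof (intro equalityI subsetI)
    fix x assume "x \<in> {x \<in> topspace A. ginv x \<in> C}"
    then have x: "x \<in> topspace A" "ginv x \<in> C" by auto
    then have "(x, ginv x) \<in> ?G" using inv_prop[OF x(1)] by simp
    then show "x \<in> fst ` ?G" by (rule image_eqI[rotated]) simp
  next
    fix x assume "x \<in> fst ` ?G"
    then obtain y where "(x,y) \<in> ?G" by force
    then have "x \<in> topspace A" "y \<in> topspace A" "mA x y = \<phi> (0,0)" "y \<in> C" by auto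
    then show "x \<in> {x \<in> topspace A. ginv x \<in> C}" using inv_unique by auto
  qed
  with cl show "closedin A {x \<in> topspace A. ginv x \<in> C}" by simp
qed

lemma part5: "compact_abelian_topological_group A mA \<and> \<not> inj eta"
proof
  show "compact_abelian_topological_group A mA"
    unfolding compact_abelian_topological_group_def
  proof (intro conjI)
    show "compact_space A" "Hausdorff_space A" by (rule cpt, rule haus)
    show "topological_semigroup_on A mA" using ap1 by (simp add: compact_hausdorff_topsemigroup_def)
    show "\<forall>x\<in>topspace A. \<forall>y\<in>topspace A. mA x y = mA y x" using comm_all by blast
    show "\<exists>u\<in>topspace A. \<exists>ginv.
        (\<forall>x\<in>topspace A. mA u x = x \<and> mA x u = x) \<and> continuous_map A A ginv \<and>
        (\<forall>x\<in>topspace A. mA x (ginv x) = u \<and> mA (ginv x) x = u)"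
      using phi_in unit_all inv_cont inv_prop comm_all by (intro bexI[of _ "\<phi> (0,0)"] exI[of _ ginv]) auto
  qed
  show "\<not> inj eta"
  proof
    assume "inj eta"
    moreover have "eta (e (1,1)) = eta (e (0,0))" using ab_eq by (simp add: \<phi>_def)
    ultimately have "e (1,1) = e (0,0)" by (rule injD)
    then show False by (simp add: e_eq)
  qed
qed

end


context bic begin

definition Fv :: "'a \<Rightarrow> real" where
  "Fv s = (if s \<in> range e then (1/2) ^ (prod_encode (inv e s)) else 0)"

lemma Fv_e: "Fv (e c) = (1/2) ^ prod_encode c"
  using inj by (simp add: Fv_def)

lemma Fv_notin: "s \<notin> range e \<Longrightarrow> Fv s = 0"
  by (simp add: Fv_def)

lemma Fv_range: "Fv s \<in> {0..1}"
  by (auto simp: Fv_def power_le_one)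

lemma Fv_cont: "continuous_on UNIV Fv"
  unfolding continuous_on_eq_continuous_at[OF open_UNIV]
proof
  fix x :: 'a
  show "isCont Fv x"
  proof (cases "x \<in> range e")
    case True
    then obtain c where "x = e c" by auto
    then have "at x = bot" using open_pt by (simp add: at_eq_bot_iff)
    then show ?thesis by (simp add: continuous_at)
  next
    case False
    have "(Fv \<longlongrightarrow> 0) (at x)"
    proof (rule tendstoI)
      fix \<epsilon> :: real assume "\<epsilon> > 0"
      then obtain N where N: "(1/2::real) ^ N < \<epsilon>" using real_arch_pow_inv[of \<epsilon> "1/2"] by auto
      define Fin where "Fin = e ` (prod_encode -` {..N})"
      have "finite Fin" unfolding Fin_def by (intro finite_imageI finite_vimageI) (auto simp: inj_prod_encode)
      then have oS: "open (- Fin)" by (simp add: finite_imp_closed open_Compl)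
      have xS: "x \<in> - Fin" using False by (auto simp: Fin_def)
      have "dist (Fv y) 0 < \<epsilon>" if "y \<in> - Fin" for y
      proof (cases "y \<in> range e")
        case True
        then obtain c where y: "y = e c" by auto
        then have "prod_encode c > N" using that by (auto simp: Fin_def)
        then have "(1/2::real) ^ prod_encode c \<le> (1/2) ^ N" by (intro power_decreasing) auto
        then have "(1/2::real) ^ prod_encode c < \<epsilon>" using N by linarith
        then show ?thesis using y by (simp add: Fv_e)
      next
        case False
        then show ?thesis using \<open>\<epsilon> > 0\<close> by (simp add: Fv_notin)
      qed
      then show "\<forall>\<^sub>F y in at x. dist (Fv y) 0 < \<epsilon>"
        unfolding eventually_at_topological using oS xS by blast
    qed
    then show ?thesis using False by (simp add: continuous_at Fv_notin)
  qed
qed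

lemma Fv_cmap: "continuous_map euclidean (top_of_set {0..1}) Fv"
  using Fv_cont Fv_range by (auto simp: continuous_map_in_subtopology)

lemma Fv_sep:
  assumes "s \<noteq> e c"
  shows "Fv s \<notin> {(1/2::real)^prod_encode c / 2 <..< 2 * (1/2)^prod_encode c}"
proof (cases "s \<in> range e")
  case True
  then obtain c' where s: "s = e c'" by auto
  then have "c' \<noteq> c" using assms by auto
  then have ne: "prod_encode c' \<noteq> prod_encode c" by (simp add: prod_encode_eq)
  define k where "k = prod_encode c"
  define k' where "k' = prod_encode c'"
  have "(1/2::real)^k' \<le> (1/2)^k / 2 \<or> 2 * (1/2::real)^k \<le> (1/2)^k'"
  proof (cases "k < k'")
    case True
    then have "(1/2::real)^k' \<le> (1/2)^(Suc k)" by (intro power_decreasing) auto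
    then show ?thesis by simp
  next
    case False
    then have "k' < k" using ne unfolding k_def k'_def by linarith
    then have "(1/2::real)^k \<le> (1/2)^(Suc k')" by (intro power_decreasing) auto
    then show ?thesis by simp
  qed
  then show ?thesis by (auto simp: s Fv_e k_def k'_def)
next
  case False
  then show ?thesis by (simp add: Fv_notin)
qed

end

lemma second_countable_real: "second_countable (euclidean :: real topology)"
proof -
  obtain B :: "real set set" where B: "countable B" "\<And>C. C \<in> B \<Longrightarrow> open C"
       "\<And>S. open S \<Longrightarrow> \<exists>U. U \<subseteq> B \<and> S = \<Union>U"
    by (metis univ_second_countable)
  show ?thesis unfolding second_countable_def
  proof (intro exI conjI ballI allI impI)
    show "countable B" by (rule B(1))
    fix V assume "V \<in> B" then show "openin euclidean V" using B(2) by simp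
  next
    fix U :: "real set" and x :: real assume "openin euclidean U \<and> x \<in> U"
    then obtain W where "W \<subseteq> B" "U = \<Union>W" "x \<in> U" using B(3) by auto
    then show "\<exists>V\<in>B. x \<in> V \<and> V \<subseteq> U" by auto
  qed
qed

lemma Y_sep: "separable_space (top_of_set {0..1::real})"
  by (intro second_countable_imp_separable_space second_countable_subtopology second_countable_real)

lemma Y_met: "metrizable_space (top_of_set {0..1::real})"
  by (intro metrizable_space_subtopology metrizable_space_euclidean)

locale scc = bic e for e :: "nat \<times> nat \<Rightarrow> 'a::{t2_space, semigroup_mult}" +
  fixes K :: "'b topology" and j :: "'a \<Rightarrow> 'b"
  assumes sc: "stone_cech_compactification (euclidean :: 'a topology) K j"
begin

lemma Kc: "compact_space K" and KH: "Hausdorff_space K" and emb: "embedding_map euclidean K j"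
  and dnsK: "K closure_of (range j) = topspace K"
  and ext: "\<And>f. continuous_map euclidean (top_of_set {0..1::real}) f \<Longrightarrow>
        (\<exists>g. continuous_map K (top_of_set {0..1::real}) g \<and> (\<forall>x. g (j x) = f x))"
  using sc unfolding stone_cech_compactification_def by auto

lemma jc: "continuous_map euclidean K j"
proof -
  have "homeomorphic_map euclidean (subtopology K (range j)) j" using emb by (simp add: embedding_map_def)
  then have "continuous_map euclidean (subtopology K (range j)) j" by (rule homeomorphic_imp_continuous_map)
  then show ?thesis by (simp add: continuous_map_in_subtopology)
qed

lemma j_in: "j x \<in> topspace K"
  using continuous_map_image_subset_topspace[OF jc] by auto

lemma meets: "openin K W \<Longrightarrow> z \<in> W \<Longrightarrow> \<exists>s. j s \<in> W"
proof -
  assume W: "openin K W" "z \<in> W"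
  then have "z \<in> K closure_of (range j)" using dnsK openin_subset by blast
  then show ?thesis using W unfolding closure_of_def by blast
qed

lemma fiber:
  assumes f: "continuous_map K (top_of_set {0..1}) f" and fj: "\<And>s. f (j s) = Fv s"
    and z: "z \<in> topspace K" and fz: "f z = Fv (e c)"
  shows "z = j (e c)"
proof (rule ccontr)
  assume ne: "z \<noteq> j (e c)"
  define r :: real where "r = (1/2)^prod_encode c"
  have r0: "r > 0" by (simp add: r_def)
  define I where "I = {r/2 <..< 2 * r}"
  define W where "W = {w \<in> topspace K. f w \<in> {0..1} \<inter> I} - {j (e c)}"
  have "openin (top_of_set {0..1::real}) ({0..1} \<inter> I)" by (auto simp: I_def)
  then have "openin K {w \<in> topspace K. f w \<in> {0..1} \<inter> I}"
    by (rule openin_continuous_map_preimage[OF f])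
  then have oW: "openin K W" unfolding W_def
    by (rule openin_diff) (rule closedin_Hausdorff_singleton[OF KH j_in])
  have "f z \<in> {0..1}" using f z by (auto simp: continuous_map_def)
  moreover have "f z \<in> I" using fz r0 by (simp add: I_def Fv_e r_def)
  ultimately have "z \<in> W" using z ne by (simp add: W_def)
  then obtain s where s: "j s \<in> W" using meets[OF oW] by blast
  then have "s \<noteq> e c" by (auto simp: W_def)
  then have "Fv s \<notin> I" using Fv_sep by (simp add: I_def r_def)
  moreover have "Fv s \<in> I" using s fj by (simp add: W_def)
  ultimately show False by simp
qed

lemma conv_lemma:
  assumes pc: "continuous_map K M p" and po: "open_map K M p" and ps: "p ` topspace K = topspace M"
    and fg: "\<And>x. x \<in> topspace K \<Longrightarrow> f x = g (p x)"
    and fib: "\<And>z c. z \<in> topspace K \<Longrightarrow> f z = f (j (e c)) \<Longrightarrow> z = j (e c)"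
    and \<alpha>: "\<alpha> \<in> topspace M" and lim: "limitin M (\<lambda>k. p (j (e (w k)))) \<alpha> sequentially"
  shows "\<exists>\<sigma>\<in>topspace K. limitin K (\<lambda>k. j (e (w k))) \<sigma> sequentially"
proof -
  obtain \<sigma> where \<sigma>: "\<sigma> \<in> topspace K" "p \<sigma> = \<alpha>" using \<alpha> ps by (metis imageE)
  have "limitin K (\<lambda>k. j (e (w k))) \<sigma> sequentially"
    unfolding limitin_def
  proof (intro conjI allI impI)
    show "\<sigma> \<in> topspace K" by (rule \<sigma>(1))
    fix U assume U: "openin K U \<and> \<sigma> \<in> U"
    then have "openin M (p ` U)" using po by (simp add: open_map_def)
    moreover have "\<alpha> \<in> p ` U" using U \<sigma> by auto
    ultimately have ev: "eventually (\<lambda>k. p (j (e (w k))) \<in> p ` U) sequentially"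
      using lim unfolding limitin_def by blast
    show "eventually (\<lambda>k. j (e (w k)) \<in> U) sequentially"
    proof (rule eventually_mono[OF ev])
      fix k assume "p (j (e (w k))) \<in> p ` U"
      then obtain u where u: "u \<in> U" "p u = p (j (e (w k)))" by auto
      have uK: "u \<in> topspace K" using u(1) U openin_subset by blast
      have "f u = f (j (e (w k)))" using fg[OF uK] fg[OF j_in] u(2) by simp
      then have "u = j (e (w k))" by (rule fib[OF uK])
      then show "j (e (w k)) \<in> U" using u(1) by simp
    qed
  qed
  with \<sigma>(1) show ?thesis by blast
qed

lemma noconv:
  assumes w: "inj w" and lim: "limitin K (\<lambda>k. j (e (w k))) \<sigma> sequentially" and \<sigma>: "\<sigma> \<notin> range j"
  shows False
proof -
  define E where "E = (\<Union>k\<in>{k. odd k}. {e (w k)})"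
  have Ew: "e (w k) \<in> E \<longleftrightarrow> odd k" for k
    using w by (auto simp: E_def e_eq dest: injD)
  have oE: "open E" unfolding E_def by (intro open_UN ballI open_pt)
  have cE: "closed E"
  proof -
    have "closure E \<subseteq> E"
    proof
      fix s assume s: "s \<in> closure E"
      show "s \<in> E"
      proof (cases "s \<in> range e")
        case True
        then obtain c where c: "s = e c" by auto
        have "{e c} \<inter> closure E \<noteq> {}" using s c by auto
        then have "{e c} \<inter> E \<noteq> {}" using open_Int_closure_eq_empty[OF open_pt] by blast
        then show ?thesis using c by auto
      next
        case False
        have "j s \<noteq> \<sigma>" using \<sigma> by auto
        moreover have "\<sigma> \<in> topspace K" using lim by (simp add: limitin_def)
        ultimately obtain U V where UV: "openin K U" "openin K V" "j s \<in> U" "\<sigma> \<in> V" "disjnt U V"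
          using KH j_in unfolding Hausdorff_space_def by metis
        have "eventually (\<lambda>k. j (e (w k)) \<in> V) sequentially" using lim UV(2,4) unfolding limitin_def by blast
        then obtain N where N: "\<And>k. k \<ge> N \<Longrightarrow> j (e (w k)) \<in> V" unfolding eventually_sequentially by blast
        have "openin euclidean {x \<in> topspace euclidean. j x \<in> U}"
          by (rule openin_continuous_map_preimage[OF jc UV(1)])
        then have oU: "open {x. j x \<in> U}" by simp
        define Wo where "Wo = {x. j x \<in> U} - e ` w ` {..<N}"
        have oWo: "open Wo" unfolding Wo_def using oU by (intro open_Diff finite_imp_closed) auto
        have "s \<in> Wo" using False UV(3) by (auto simp: Wo_def)
        then have "Wo \<inter> closure E \<noteq> {}" using s by auto
        then have "Wo \<inter> E \<noteq> {}" using open_Int_closure_eq_empty[OF oWo] by blast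
        then obtain k where k: "odd k" "e (w k) \<in> Wo" by (auto simp: E_def)
        have "k \<ge> N"
        proof (rule ccontr)
          assume "\<not> k \<ge> N" then have "e (w k) \<in> e ` w ` {..<N}" by auto
          then show False using k(2) by (simp add: Wo_def)
        qed
        then have "j (e (w k)) \<in> V" by (rule N)
        moreover have "j (e (w k)) \<in> U" using k(2) by (simp add: Wo_def)
        ultimately show ?thesis using UV(5) by (auto simp: disjnt_def)
      qed
    qed
    then show ?thesis by (simp add: closure_subset_eq)
  qed
  define G :: "'a \<Rightarrow> real" where "G s = (if s \<in> E then 1 else 0)" for s
  have Gc: "continuous_map euclidean (top_of_set {0..1}) G"
    unfolding continuous_map_def
  proof (intro conjI allI impI)
    show "G \<in> topspace euclidean \<rightarrow> topspace (top_of_set {0..1})" by (auto simp: G_def)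
    fix U :: "real set"
    have eq: "{x \<in> topspace euclidean. G x \<in> U} = (if (1::real) \<in> U then E else {}) \<union> (if (0::real) \<in> U then - E else {})"
      by (auto simp: G_def)
    show "openin euclidean {x \<in> topspace euclidean. G x \<in> U}"
      unfolding eq using oE cE by (auto simp: open_Compl)
  qed
  obtain g where g: "continuous_map K (top_of_set {0..1}) g" "\<And>x. g (j x) = G x"
    using ext[OF Gc] by blast
  have "limitin (top_of_set {0..1}) (g \<circ> (\<lambda>k. j (e (w k)))) (g \<sigma>) sequentially"
    by (rule continuous_map_limit[OF g(1) lim])
  then have "limitin euclidean (\<lambda>k. if odd k then 1 else 0) (g \<sigma>) sequentially"
    by (simp add: limitin_subtopology o_def g(2) G_def Ew)
  then have t: "(\<lambda>k. if odd k then 1 else 0::real) \<longlonglongrightarrow> g \<sigma>" by simp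
  have "eventually (\<lambda>k. dist (if odd k then 1 else 0::real) (g \<sigma>) < 1/2) sequentially"
    using tendstoD[OF t, of "1/2"] by simp
  then obtain N :: nat where N: "\<forall>k\<ge>N. dist (if odd k then 1 else 0::real) (g \<sigma>) < 1/2"
    unfolding eventually_sequentially by blast
  have "dist (0::real) (g \<sigma>) < 1/2" using N[rule_format, of "2*N"] by simp
  moreover have "dist (1::real) (g \<sigma>) < 1/2" using N[rule_format, of "2*N+1"] by simp
  ultimately show False by (simp add: dist_real_def)
qed

lemma lim_back:
  assumes "limitin K (\<lambda>k. j (x k)) (j s) sequentially"
  shows "(x \<longlongrightarrow> s) sequentially"
proof -
  have "homeomorphic_map euclidean (subtopology K (range j)) j" using emb by (simp add: embedding_map_def)
  then obtain h where h: "homeomorphic_maps euclidean (subtopology K (range j)) j h"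
    by (auto simp: homeomorphic_map_maps)
  then have hc: "continuous_map (subtopology K (range j)) euclidean h" and hj: "\<And>y. h (j y) = y"
    by (auto simp: homeomorphic_maps_def)
  have "limitin (subtopology K (range j)) (\<lambda>k. j (x k)) (j s) sequentially"
    using assms by (simp add: limitin_subtopology)
  from continuous_map_limit[OF hc this]
  show ?thesis by (simp add: o_def hj)
qed

lemma part4: "\<not> openly_factorizable K"
proof
  assume of: "openly_factorizable K"
  obtain f where f: "continuous_map K (top_of_set {0..1}) f" "\<And>x. f (j x) = Fv x"
    using ext[OF Fv_cmap] by blast
  obtain M :: "real topology" and p g where M: "separable_space M" "metrizable_space M"
    and pc: "continuous_map K M p" and po: "open_map K M p" and ps: "p ` topspace K = topspace M"
    and gc: "continuous_map M (top_of_set {0..1}) g" and fg: "\<forall>x\<in>topspace K. f x = g (p x)"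
    using of[unfolded openly_factorizable_def, rule_format, OF conjI[OF Y_sep conjI[OF Y_met f(1)]]]
    by blast
  have fib: "\<And>z c. z \<in> topspace K \<Longrightarrow> f z = f (j (e c)) \<Longrightarrow> z = j (e c)"
    using fiber[OF f(1)] f(2) by simp
  have cM: "compact_space M"
  proof -
    have "compactin M (p ` topspace K)"
      by (rule image_compactin[OF _ pc]) (use Kc in \<open>simp add: compact_space_def\<close>)
    then show ?thesis using ps by (simp add: compact_space_def)
  qed
  have "metrizable_space (prod_topology M M)" using M(2) by (simp add: metrizable_space_prod_topology)
  then obtain Ms d where Ms: "Metric_space Ms d" and MM: "prod_topology M M = Metric_space.mtopology Ms d"
    unfolding metrizable_space_def by blast
  have cMM: "compact_space (Metric_space.mtopology Ms d)"
    using cM MM[symmetric] by (simp add: compact_space_prod_topology)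
  define \<tau> where "\<tau> k = (p (j (e (0, Suc k))), p (j (e (Suc k, 0))))" for k
  have "range \<tau> \<subseteq> Ms"
  proof -
    have "range \<tau> \<subseteq> topspace (prod_topology M M)"
      using pc j_in by (auto simp: \<tau>_def continuous_map_def)
    then show ?thesis using MM Metric_space.topspace_mtopology[OF Ms] by simp
  qed
  then obtain l r where lr: "strict_mono r" "limitin (Metric_space.mtopology Ms d) (\<tau> \<circ> r) l sequentially"
    using cMM Metric_space.compact_space_sequentially[OF Ms] by blast
  then have "limitin (prod_topology M M) (\<tau> \<circ> r) l sequentially" using MM by simp
  then have l1: "limitin M (\<lambda>k. p (j (e (0, Suc (r k))))) (fst l) sequentially"
    and l2: "limitin M (\<lambda>k. p (j (e (Suc (r k), 0)))) (snd l) sequentially"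
    by (simp_all add: limitin_pairwise o_def \<tau>_def)
  have injr: "inj r" using lr(1) by (rule strict_mono_imp_inj_on)
  obtain \<sigma> where \<sigma>: "limitin K (\<lambda>k. j (e (0, Suc (r k)))) \<sigma> sequentially"
    using conv_lemma[OF pc po ps _ fib _ l1] fg limitin_topspace[OF l1] by blast
  obtain \<rho> where \<rho>: "limitin K (\<lambda>k. j (e (Suc (r k), 0))) \<rho> sequentially"
    using conv_lemma[OF pc po ps _ fib _ l2] fg limitin_topspace[OF l2] by blast
  have \<sigma>j: "\<sigma> \<in> range j"
  proof (rule ccontr)
    assume "\<sigma> \<notin> range j"
    moreover have "inj (\<lambda>k. (0::nat, Suc (r k)))" using injr by (auto simp: inj_def)
    ultimately show False using noconv \<sigma> by blast
  qed
  have \<rho>j: "\<rho> \<in> range j"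
  proof (rule ccontr)
    assume "\<rho> \<notin> range j"
    moreover have "inj (\<lambda>k. (Suc (r k), 0::nat))" using injr by (auto simp: inj_def)
    ultimately show False using noconv \<rho> by blast
  qed
  obtain s t where st: "\<sigma> = j s" "\<rho> = j t" using \<sigma>j \<rho>j by auto
  have xs: "(\<lambda>k. e (0, Suc (r k))) \<longlonglongrightarrow> s" using lim_back \<sigma> st by simp
  have yt: "(\<lambda>k. e (Suc (r k), 0)) \<longlonglongrightarrow> t" using lim_back \<rho> st by simp
  have "(\<lambda>k. fst (e (0, Suc (r k)), e (Suc (r k), 0)) * snd (e (0, Suc (r k)), e (Suc (r k), 0)))
          \<longlonglongrightarrow> fst (s,t) * snd (s,t)"
    by (rule continuous_on_tendsto_compose[OF topsg tendsto_Pair[OF xs yt]]) auto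
  moreover have "e (0, Suc (r k)) * e (Suc (r k), 0) = e (0,0)" for k by (simp add: hom[symmetric] bm)
  ultimately have "(\<lambda>k. e (0,0)) \<longlonglongrightarrow> s * t" by simp
  then have "s * t = e (0,0)" by (simp add: LIMSEQ_const_iff)
  then have "s \<in> range e" using part1[of s t] by auto
  then obtain c where c: "s = e c" by auto
  have "eventually (\<lambda>k. e (0, Suc (r k)) \<in> {e c}) sequentially"
    using topological_tendstoD[OF xs open_pt] c by simp
  then obtain N where N: "\<And>k. k \<ge> N \<Longrightarrow> e (0, Suc (r k)) = e c" unfolding eventually_sequentially by blast
  have "e (0, Suc (r N)) = e (0, Suc (r (Suc N)))" using N[of N] N[of "Suc N"] by simp
  then have "r N = r (Suc N)" by (simp add: e_eq)
  moreover have "r N < r (Suc N)" using lr(1) by (simp add: strict_mono_def)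
  ultimately show False by simp
qed

end


theorem theorem5p1:
  fixes e :: "nat \<times> nat \<Rightarrow> 'a::{t2_space, semigroup_mult}"
  assumes topsg: "continuous_on UNIV (\<lambda>z::'a \<times> 'a. fst z * snd z)"
    and inj: "inj e"
    and hom: "\<And>x y. e (bicyclic_mult x y) = e x * e y"
    and dense: "closure (range e) = UNIV"
  shows "(\<forall>s t. s \<notin> range e \<longrightarrow> s * t \<notin> range e \<and> t * s \<notin> range e)
    \<and> (\<forall>c. let D = {(e x, e y) | x y. bicyclic_mult x y = c} in
            open D \<and> closed D \<and> subtopology euclidean D = discrete_topology D)
    \<and> \<not> pseudocompact_space (euclidean :: ('a \<times> 'a) topology)
    \<and> (completely_regular_space (euclidean :: 'a topology) \<and> t1_space (euclidean :: 'a topology) \<longrightarrow>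
        (\<forall>(K :: 'b topology) j. stone_cech_compactification (euclidean :: 'a topology) K j
             \<longrightarrow> \<not> openly_factorizable K))
    \<and> (\<forall>(A :: 'c topology) mA (eta :: 'a \<Rightarrow> 'c).
          almost_periodic_compactification A mA eta \<longrightarrow>
            compact_abelian_topological_group A mA \<and> \<not> inj eta)"
proof -
  interpret bic e using topsg inj hom dense by unfold_locales
  have p1: "\<forall>s t. s \<notin> range e \<longrightarrow> s * t \<notin> range e \<and> t * s \<notin> range e" using part1 by blast
  have p2: "\<forall>c. let D = {(e x, e y) | x y. bicyclic_mult x y = c} in
            open D \<and> closed D \<and> subtopology euclidean D = discrete_topology D" using part2 by blast
  have p4: "\<forall>(K :: 'b topology) j. stone_cech_compactification (euclidean :: 'a topology) K j
             \<longrightarrow> \<not> openly_factorizable K"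
  proof (intro allI impI)
    fix K :: "'b topology" and j :: "'a \<Rightarrow> 'b"
    assume "stone_cech_compactification (euclidean :: 'a topology) K j"
    then interpret scc e K j using topsg inj hom dense by unfold_locales
    show "\<not> openly_factorizable K" by (rule part4)
  qed
  have p5: "\<forall>(A :: 'c topology) mA (eta :: 'a \<Rightarrow> 'c).
          almost_periodic_compactification A mA eta \<longrightarrow>
            compact_abelian_topological_group A mA \<and> \<not> inj eta"
  proof (intro allI impI)
    fix A :: "'c topology" and mA and eta :: "'a \<Rightarrow> 'c"
    assume "almost_periodic_compactification A mA eta"
    then interpret apc e A mA eta using topsg inj hom dense by unfold_locales
    show "compact_abelian_topological_group A mA \<and> \<not> inj eta" by (rule part5)
  qed
  show ?thesis using p1 p2 part3 p4 p5 by blast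
qed

end
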